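(* For every $\delta>0$ there exists a real number $\varepsilon$ with $0<\varepsilon<\delta$ such that $$\inf_{n \ge 1} \, \Vert (1 + \varepsilon)^n \Vert > 2^{-17}\, \varepsilon\, |\log \varepsilon|^{-1}.$$
   Context: For a real number $x$, $\Vert x \Vert$ denotes the distance from $x$ to the nearest integer. $\log$ denotes the natural logarithm. The infimum is over all positive integers $n$. *)

theory Defs
  imports "HOL-Analysis.Analysis"
begin

definition dist_int :: "real \<Rightarrow> real" where
  "dist_int x = \<bar>x - of_int (round x)\<bar>"

end

theory Submission
  imports Defs
begin


lemma dist_int_le: "dist_int x \<le> \<bar>x - of_int m\<bar>"
  unfolding dist_int_def by (rule round_diff_minimal)

lemma dist_int_nonneg: "0 \<le> dist_int x"
  unfolding dist_int_def by simp

lemma dist_int_lip: "dist_int x \<le> dist_int y + \<bar>x - y\<bar>"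
proof -
  have "dist_int x \<le> \<bar>x - of_int (round y)\<bar>" by (rule dist_int_le)
  also have "\<dots> \<le> \<bar>y - of_int (round y)\<bar> + \<bar>x - y\<bar>" by linarith
  finally show ?thesis unfolding dist_int_def .
qed

lemma dist_int_cont: "continuous_on UNIV dist_int"
proof (rule continuous_onI)
  fix x :: real and e :: real assume "e > 0"
  show "\<exists>d>0. \<forall>x'\<in>UNIV. dist x' x < d \<longrightarrow> dist (dist_int x') (dist_int x) \<le> e"
  proof (intro exI[of _ e] conjI ballI impI)
    fix x' assume "dist x' x < e"
    have "dist_int x' \<le> dist_int x + \<bar>x' - x\<bar>" "dist_int x \<le> dist_int x' + \<bar>x - x'\<bar>"
      by (rule dist_int_lip)+
    then show "dist (dist_int x') (dist_int x) \<le> e" using \<open>dist x' x < e\<close>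
      by (simp add: dist_real_def abs_if split: if_splits)
  qed (use \<open>e>0\<close> in auto)
qed

lemma dist_int_measurable[measurable]: "dist_int \<in> borel_measurable borel"
  by (rule borel_measurable_continuous_onI[OF dist_int_cont])

lemma fmeas_bounded: "S \<subseteq> {a..b::real} \<Longrightarrow> S \<in> sets lborel \<Longrightarrow> S \<in> fmeasurable lborel"
  by (rule fmeasurableI2[of "{a..b}"]) (auto simp: fmeasurable_def emeasure_lborel_Icc_eq)

lemma pow_diff_lower:
  fixes s t :: real
  assumes "0 \<le> s" "s \<le> t"
  shows "real n * s^(n-1) * (t - s) \<le> t^n - s^n"
proof (induction n)
  case 0 then show ?case by simp
next
  case (Suc n)
  show ?case
  proof (cases n)
    case 0 then show ?thesis by simp
  next
    case (Suc j)
    have "t^Suc n - s^Suc n = t*(t^n - s^n) + s^n*(t-s)" by (simp add: algebra_simps)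
    also have "t*(t^n - s^n) \<ge> s*(real n * s^(n-1) * (t - s))"
      using Suc.IH assms by (intro mult_mono) auto
    moreover have "s*(real n * s^(n-1) * (t - s)) = real n * s^n * (t-s)"
      using Suc by (simp add: algebra_simps)
    ultimately show ?thesis by (simp add: algebra_simps)
  qed
qed

lemma pow_diff_upper:
  fixes s t :: real
  assumes "0 \<le> s" "s \<le> t"
  shows "t^n - s^n \<le> real n * t^(n-1) * (t - s)"
proof (induction n)
  case 0 then show ?case by simp
next
  case (Suc n)
  show ?case
  proof (cases n)
    case 0 then show ?thesis by simp
  next
    case (Suc j)
    have "t^Suc n - s^Suc n = t*(t^n - s^n) + s^n*(t-s)" by (simp add: algebra_simps)
    also have "t*(t^n - s^n) \<le> t*(real n * t^(n-1) * (t - s))"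
      using Suc.IH assms by (intro mult_left_mono) auto
    moreover have "s^n*(t-s) \<le> t^n * (t-s)"
      using assms by (intro mult_right_mono power_mono) auto
    moreover have "t*(real n * t^(n-1) * (t - s)) = real n * t^n * (t-s)"
      using Suc by (simp add: algebra_simps)
    ultimately show ?thesis by (simp add: algebra_simps)
  qed
qed

lemma pow_small_le2:
  fixes t :: real
  assumes "0 \<le> t" "real n * t \<le> 1/2"
  shows "(1+t)^n \<le> 2"
proof -
  have "(1+t)^n \<le> exp t ^ n"
    using assms by (intro power_mono) (auto simp: exp_ge_add_one_self add.commute)
  also have "\<dots> = exp (real n * t)" by (simp add: exp_of_nat_mult)
  also have "\<dots> \<le> exp (1/2)" using assms by simp
  also have "exp (1/2::real) \<le> 2"
  proof -
    have "exp (1/2::real) ^ 2 = exp 1" by (simp add: exp_double[symmetric] power2_eq_square exp_add[symmetric])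
    also have "\<dots> \<le> 2^2" using exp_le by simp
    finally show ?thesis by (rule power2_le_imp_le) simp
  qed
  finally show ?thesis .
qed

lemma tele_int:
  fixes g :: "int \<Rightarrow> real"
  shows "(\<Sum>m\<in>{a..a - 1 + int n}. g m - g (m-1)) = g (a - 1 + int n) - g (a-1)"
proof (induction n)
  case 0 then show ?case by simp
next
  case (Suc n)
  have "{a..a - 1 + int (Suc n)} = insert (a + int n) {a..a - 1 + int n}" by auto
  then show ?case using Suc by (simp add: algebra_simps)
qed

lemma L1:
  fixes p q \<beta> :: real and k :: nat
  assumes p1: "1 \<le> p" and pq: "p \<le> q" and k1: "1 \<le> k" and b0: "0 < \<beta>" and b4: "\<beta> \<le> 1/4"
  shows "measure lborel {x\<in>{p..<q}. dist_int (x^k) < \<beta>} \<le> 3*\<beta>*(q-p) + 12*\<beta>/(real k * p^(k-1))"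
proof -
  define P where "P = p^k"
  define Q where "Q = q^k"
  define pc where "pc m = {x\<in>{p..<q}. \<bar>x^k - of_int m\<bar> < \<beta>}" for m :: int
  define d where "d = real k * p^(k-1)"
  have d0: "d > 0" using p1 k1 by (simp add: d_def)
  have kpos: "0 < k" using k1 by simp
  have pc_meas: "pc m \<in> sets lborel" for m unfolding pc_def by measurable
  have pc_fm: "pc m \<in> fmeasurable lborel" for m
    by (rule fmeas_bounded[of _ p q]) (auto simp: pc_def pc_meas)
  have edge: "measure lborel (pc m) \<le> 4*\<beta>/d" for m
  proof (cases "pc m = {}")
    case True then show ?thesis using b0 d0 by simp
  next
    case False
    then obtain x0 where x0: "x0 \<in> pc m" by auto
    have sub: "pc m \<subseteq> {x0 - 2*\<beta>/d .. x0 + 2*\<beta>/d}"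
    proof
      fix x assume x: "x \<in> pc m"
      have gen: "t - s \<le> 2*\<beta>/d" if "s \<in> pc m" "t \<in> pc m" "s \<le> t" for s t
      proof -
        have "real k * s^(k-1) * (t - s) \<le> t^k - s^k"
          using that p1 by (intro pow_diff_lower) (auto simp: pc_def)
        moreover have "p^(k-1) \<le> s^(k-1)" using that p1 by (intro power_mono) (auto simp: pc_def)
        hence "d * (t - s) \<le> real k * s^(k-1) * (t - s)" unfolding d_def
          using that by (intro mult_right_mono mult_left_mono) auto
        moreover have "t^k - s^k < 2*\<beta>" using that by (auto simp: pc_def)
        ultimately have "d * (t-s) \<le> 2*\<beta>" by linarith
        then show ?thesis using d0 by (simp add: field_simps)
      qed
      show "x \<in> {x0 - 2*\<beta>/d .. x0 + 2*\<beta>/d}"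
        using gen[OF x x0] gen[OF x0 x] by (cases "x \<le> x0") auto
    qed
    have "measure lborel (pc m) \<le> measure lborel {x0 - 2*\<beta>/d .. x0 + 2*\<beta>/d}"
      by (rule measure_mono_fmeasurable[OF sub pc_meas]) (auto simp: fmeasurable_def emeasure_lborel_Icc_eq)
    also have "\<dots> = 4*\<beta>/d" using b0 d0 by (simp add: measure_lborel_Icc)
    finally show ?thesis .
  qed
  have P1: "1 \<le> P" using p1 by (simp add: P_def one_le_power)
  have PQ: "P \<le> Q" using p1 pq by (simp add: P_def Q_def power_mono)
  have rootP: "root k P = p" using p1 kpos by (simp add: P_def real_root_pos2)
  have rootQ: "root k Q = q" using p1 pq kpos by (simp add: Q_def real_root_pos2)
  define A where "A m = root k (of_int m - \<beta>)" for m :: int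
  define C where "C m = root k (of_int m - 1)" for m :: int
  have mid: "measure lborel (pc m) \<le> 3*\<beta>*(A m - C m)" and CA: "C m \<le> A m"
    if m: "\<lfloor>P\<rfloor> + 2 \<le> m" for m
  proof -
    have mP: "P < of_int m - 1"
    proof -
      have "of_int (\<lfloor>P\<rfloor> + 2) \<le> (of_int m :: real)" using m by (simp only: of_int_le_iff)
      then show ?thesis by linarith
    qed
    define B where "B = root k (of_int m + \<beta>)"
    have Ak: "A m ^ k = of_int m - \<beta>" unfolding A_def using mP P1 b4 kpos by (intro real_root_pow_pos2) auto
    have Bk: "B ^ k = of_int m + \<beta>" unfolding B_def using mP P1 b0 kpos by (intro real_root_pow_pos2) auto
    have Ck: "C m ^ k = of_int m - 1" unfolding C_def using mP P1 b4 kpos by (intro real_root_pow_pos2) auto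
    have pC: "p \<le> C m" unfolding C_def rootP[symmetric] using mP kpos by (simp add: real_root_le_iff)
    show CA: "C m \<le> A m" unfolding C_def A_def using b4 kpos by (simp add: real_root_le_iff)
    have AB: "A m \<le> B" unfolding B_def A_def using b0 kpos by (simp add: real_root_le_iff)
    have A1: "1 \<le> A m" using pC CA p1 by linarith
    define D where "D = real k * A m ^ (k-1)"
    have D0: "D > 0" using A1 kpos by (simp add: D_def)
    have e1: "D * (B - A m) \<le> 2*\<beta>"
      using pow_diff_lower[of "A m" B k] A1 AB Ak Bk by (simp add: D_def)
    have e2: "1 - \<beta> \<le> D * (A m - C m)"
      using pow_diff_upper[of "C m" "A m" k] A1 pC p1 CA Ak Ck by (simp add: D_def)
    have sub: "pc m \<subseteq> {A m .. B}"
    proof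
      fix x assume x: "x \<in> pc m"
      have x0: "0 \<le> x" using x p1 by (auto simp: pc_def)
      have "of_int m - \<beta> < x^k" "x^k < of_int m + \<beta>" using x by (auto simp: pc_def)
      then have "A m < root k (x^k)" "root k (x^k) < B"
        unfolding A_def B_def using kpos by (auto simp: real_root_less_iff)
      then show "x \<in> {A m .. B}" using x0 kpos by (simp add: real_root_pos2)
    qed
    have "measure lborel (pc m) \<le> measure lborel {A m .. B}"
      by (rule measure_mono_fmeasurable[OF sub pc_meas]) (auto simp: fmeasurable_def emeasure_lborel_Icc_eq)
    also have "\<dots> = B - A m" using AB by (simp add: measure_lborel_Icc)
    also have "B - A m \<le> 3*\<beta>*(A m - C m)"
    proof -
      have "D * (B - A m) \<le> 2*\<beta>" by (rule e1)
      also have "2*\<beta> \<le> 3*\<beta>*(1-\<beta>)" 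
      proof - have "0 \<le> \<beta>*(1-3*\<beta>)" using b0 b4 by (intro mult_nonneg_nonneg) auto
        then show ?thesis by (simp add: algebra_simps) qed
      also have "\<dots> \<le> 3*\<beta>*(D * (A m - C m))" using e2 b0 by simp
      finally have "D * (B - A m) \<le> D * (3*\<beta>*(A m - C m))" by (simp add: algebra_simps)
      then show ?thesis using D0 by simp
    qed
    finally show "measure lborel (pc m) \<le> 3*\<beta>*(A m - C m)" .
  qed
  define M1 where "M1 = {\<lfloor>P\<rfloor> + 2 .. \<lfloor>Q\<rfloor>}"
  have sumM1: "(\<Sum>m\<in>M1. measure lborel (pc m)) \<le> 3*\<beta>*(q-p)"
  proof (cases "\<lfloor>P\<rfloor> + 2 \<le> \<lfloor>Q\<rfloor>")
    case False
    then have "M1 = {}" by (simp add: M1_def)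
    then show ?thesis using b0 pq by simp
  next
    case True
    define g where "g m = root k (of_int m)" for m :: int
    have "(\<Sum>m\<in>M1. measure lborel (pc m)) \<le> (\<Sum>m\<in>M1. 3*\<beta>*(g m - g (m-1)))"
    proof (rule sum_mono)
      fix m assume "m \<in> M1"
      then have m: "\<lfloor>P\<rfloor> + 2 \<le> m" by (simp add: M1_def)
      have "A m \<le> g m" unfolding A_def g_def using b0 kpos by (simp add: real_root_le_iff)
      moreover have "C m = g (m-1)" by (simp add: C_def g_def)
      ultimately show "measure lborel (pc m) \<le> 3*\<beta>*(g m - g (m-1))"
        using mid[OF m] b0 by (smt (verit, ccfv_SIG) mult_left_mono)
    qed
    also have "\<dots> = 3*\<beta>*(\<Sum>m\<in>M1. g m - g (m-1))" by (simp add: sum_distrib_left)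
    also have "(\<Sum>m\<in>M1. g m - g (m-1)) = g \<lfloor>Q\<rfloor> - g (\<lfloor>P\<rfloor> + 1)"
    proof -
      obtain n where n: "\<lfloor>Q\<rfloor> = (\<lfloor>P\<rfloor> + 2) - 1 + int n"
        using True by (intro that[of "nat (\<lfloor>Q\<rfloor> - \<lfloor>P\<rfloor> - 1)"]) simp
      show ?thesis unfolding M1_def n by (subst tele_int) (simp add: add.commute)
    qed
    also have "g \<lfloor>Q\<rfloor> - g (\<lfloor>P\<rfloor> + 1) \<le> q - p"
    proof -
      have "g \<lfloor>Q\<rfloor> \<le> q" unfolding g_def rootQ[symmetric] using kpos by (simp add: real_root_le_iff)
      moreover have "p \<le> g (\<lfloor>P\<rfloor> + 1)" unfolding g_def rootP[symmetric] using kpos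
        by (simp add: real_root_le_iff)
      ultimately show ?thesis by linarith
    qed
    finally show ?thesis using b0 by (simp add: mult_left_mono)
  qed
  have cover: "{x\<in>{p..<q}. dist_int (x^k) < \<beta>} \<subseteq>
      (\<Union>m\<in>M1. pc m) \<union> (pc \<lfloor>P\<rfloor> \<union> pc (\<lfloor>P\<rfloor>+1) \<union> pc (\<lfloor>Q\<rfloor>+1))"
  proof
    fix x assume x: "x \<in> {x\<in>{p..<q}. dist_int (x^k) < \<beta>}"
    define m where "m = round (x^k)"
    have xm: "\<bar>x^k - of_int m\<bar> < \<beta>" using x by (simp add: m_def dist_int_def)
    have xin: "x \<in> {p..<q}" using x by simp
    have "P \<le> x^k" using xin p1 by (simp add: P_def power_mono)
    moreover have "x^k < Q" using xin p1 kpos by (simp add: Q_def power_strict_mono)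
    ultimately have l: "P - \<beta> < of_int m" and u: "of_int m < Q + \<beta>" using xm by linarith+
    have pcx: "x \<in> pc m" using xin xm by (simp add: pc_def)
    have f1: "of_int \<lfloor>P\<rfloor> \<le> P" "P < of_int \<lfloor>P\<rfloor> + 1" by linarith+
    have f2: "of_int \<lfloor>Q\<rfloor> \<le> Q" "Q < of_int \<lfloor>Q\<rfloor> + 1" by linarith+
    have "of_int (\<lfloor>P\<rfloor> - 1) < (of_int m :: real)" using l f1 b4 by (simp only: of_int_diff of_int_1; linarith)
    then have m1: "\<lfloor>P\<rfloor> \<le> m" by (simp only: of_int_less_iff; linarith)
    have "(of_int m :: real) < of_int (\<lfloor>Q\<rfloor> + 2)" using u f2 b4 by (simp only: of_int_add of_int_numeral; linarith)
    then have m2: "m \<le> \<lfloor>Q\<rfloor> + 1" by (simp only: of_int_less_iff; linarith)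
    have "m = \<lfloor>P\<rfloor> \<or> m = \<lfloor>P\<rfloor> + 1 \<or> m = \<lfloor>Q\<rfloor>+1 \<or> m \<in> M1"
      using m1 m2 unfolding M1_def by (simp; arith)
    then show "x \<in> (\<Union>m\<in>M1. pc m) \<union> (pc \<lfloor>P\<rfloor> \<union> pc (\<lfloor>P\<rfloor>+1) \<union> pc (\<lfloor>Q\<rfloor>+1))"
      using pcx by auto
  qed
  define U1 where "U1 = (\<Union>m\<in>M1. pc m)"
  define U2 where "U2 = pc \<lfloor>P\<rfloor> \<union> pc (\<lfloor>P\<rfloor>+1) \<union> pc (\<lfloor>Q\<rfloor>+1)"
  have finM1: "finite M1" by (simp add: M1_def)
  have U1m: "U1 \<in> sets lborel" unfolding U1_def using finM1 by (intro sets.finite_UN pc_meas) auto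
  have U2m: "U2 \<in> sets lborel" unfolding U2_def by (intro sets.Un pc_meas)
  have Ufm: "U1 \<union> U2 \<in> fmeasurable lborel"
    by (rule fmeas_bounded[of _ p q]) (auto simp: U1_def U2_def pc_def intro: U1m U2m)
  have "measure lborel {x\<in>{p..<q}. dist_int (x^k) < \<beta>} \<le> measure lborel (U1 \<union> U2)"
    by (rule measure_mono_fmeasurable[OF cover[folded U1_def U2_def] _ Ufm]) measurable
  also have "\<dots> \<le> measure lborel U1 + measure lborel U2"
    by (intro measure_Un_le U1m U2m)
  finally have t1: "measure lborel {x\<in>{p..<q}. dist_int (x^k) < \<beta>} \<le> measure lborel U1 + measure lborel U2" .
  have t2: "measure lborel U1 \<le> (\<Sum>m\<in>M1. measure lborel (pc m))"
    unfolding U1_def using finM1 by (intro measure_UNION_le pc_meas) auto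
  have t3: "measure lborel U2 \<le>
      measure lborel (pc \<lfloor>P\<rfloor>) + measure lborel (pc (\<lfloor>P\<rfloor>+1)) + measure lborel (pc (\<lfloor>Q\<rfloor>+1))"
    unfolding U2_def by (smt (verit) measure_Un_le pc_meas sets.Un)
  have e: "4*\<beta>/d + 4*\<beta>/d + 4*\<beta>/d = 12*\<beta>/d" using d0 by (simp add: field_simps)
  have "measure lborel {x\<in>{p..<q}. dist_int (x^k) < \<beta>} \<le> 3*\<beta>*(q-p) + 12*\<beta>/d"
    using t1 t2 t3 sumM1 edge[of "\<lfloor>P\<rfloor>"] edge[of "\<lfloor>P\<rfloor>+1"] edge[of "\<lfloor>Q\<rfloor>+1"] e by linarith
  then show ?thesis unfolding d_def .
qed



definition lo :: "nat \<Rightarrow> real \<Rightarrow> real" where "lo m x = of_int \<lfloor>x * 2^m\<rfloor> / 2^m"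
definition cell :: "nat \<Rightarrow> real \<Rightarrow> real set" where "cell m x = {lo m x ..< lo m x + 1/2^m}"
definition img :: "nat \<Rightarrow> nat \<Rightarrow> real \<Rightarrow> real" where
  "img k m x = (lo m x + 1/2^m)^k - lo m x ^ k"

lemma cell_iff: "y \<in> cell m x \<longleftrightarrow> \<lfloor>y * 2^m\<rfloor> = \<lfloor>x * 2^m\<rfloor>"
proof -
  have p: "(0::real) < 2^m" by simp
  have "y \<in> cell m x \<longleftrightarrow> of_int \<lfloor>x * 2^m\<rfloor> \<le> y * 2^m \<and> y * 2^m < of_int \<lfloor>x * 2^m\<rfloor> + 1"
    unfolding cell_def lo_def using p
    by (auto simp: divide_simps add_divide_distrib[symmetric])
  also have "\<dots> \<longleftrightarrow> \<lfloor>y * 2^m\<rfloor> = \<lfloor>x * 2^m\<rfloor>" by (simp add: floor_eq_iff)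
  finally show ?thesis .
qed

lemma cell_self: "x \<in> cell m x" by (simp add: cell_iff)

lemma cell_sym: "y \<in> cell m x \<Longrightarrow> x \<in> cell m y" by (simp add: cell_iff)

lemma cell_lo: "y \<in> cell m x \<Longrightarrow> lo m y = lo m x"
  by (simp add: cell_iff lo_def)

lemma cell_eq: "y \<in> cell m x \<Longrightarrow> cell m y = cell m x"
proof -
  assume "y \<in> cell m x"
  from cell_lo[OF this] show ?thesis unfolding cell_def by simp
qed

lemma cell_img: "y \<in> cell m x \<Longrightarrow> img k m y = img k m x"
  unfolding img_def by (drule cell_lo) simp

lemma floor_nest: "m \<le> M \<Longrightarrow> \<lfloor>(x::real) * 2^m\<rfloor> = \<lfloor>x * 2^M\<rfloor> div 2^(M-m)"
proof -
  assume mM: "m \<le> M"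
  have "(2::real)^M = 2^m * 2^(M-m)" using mM by (simp add: power_add[symmetric])
  then have "x * 2^m = (x * 2^M) / real_of_int (2^(M-m))" by simp
  then show ?thesis using floor_divide_real_eq_div[of "2^(M-m)" "x*2^M"] by simp
qed

lemma cell_nest: "m \<le> M \<Longrightarrow> y \<in> cell M x \<Longrightarrow> y \<in> cell m x"
  by (simp add: cell_iff floor_nest)

lemma lo_grid: "lo m (of_int i / 2^m) = of_int i / 2^m"
  by (simp add: lo_def)

lemma cell_grid: "cell m (of_int i / 2^m) = {of_int i / 2^m ..< (of_int i + 1) / 2^m}"
  by (simp add: cell_def lo_grid add_divide_distrib)

lemma lo_eq: "lo m x = of_int \<lfloor>x * 2^m\<rfloor> / 2^m" by (simp add: lo_def)

lemma pow_diff_mono_k: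
  fixes u h :: real
  assumes "1 \<le> u" "0 \<le> h" "i \<le> k"
  shows "(u+h)^i - u^i \<le> (u+h)^k - u^k"
  using assms(3)
proof (induction k rule: dec_induct)
  case base then show ?case by simp
next
  case (step k)
  have "(u+h)^Suc k - u^Suc k = (u+h)*((u+h)^k - u^k) + h*u^k" by (simp add: algebra_simps)
  moreover have "(u+h)^k - u^k \<ge> 0" using assms by (simp add: power_mono)
  moreover have "(u+h)*((u+h)^k - u^k) \<ge> (u+h)^k - u^k"
    using assms \<open>(u+h)^k - u^k \<ge> 0\<close> by (simp add: mult_le_cancel_right1)
  moreover have "h*u^k \<ge> 0" using assms by simp
  ultimately show ?case using step.IH by linarith
qed


locale cset =
  fixes p :: nat and eta :: real and L :: nat
  assumes p1: "1 \<le> p" and eta_pos: "0 < eta" and eta_a: "eta < 1/2^p" and eta_small: "2*eta \<le> 1/4"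
   and L_big: "8/eta \<le> (1 + 1/2^p)^L" and etaL: "eta*(real L + 1) \<le> 1/2"
   and early: "6*eta*(1/2^p)*real L + 24*eta*(\<Sum>n\<in>{1..L}. 1/real n) \<le> (1/2^p)/2"
   and rho: "1/2 \<le> (1 - 120*eta)^L" and rho1: "120*eta < 1"
begin

definition X where "X = {1 + 1/2^p ..< 1 + 2/(2::real)^p}"

lemma X_floor: "y \<in> X \<longleftrightarrow> \<lfloor>y*2^p\<rfloor> = 2^p + 1"
proof -
  have pp: "(0::real) < 2^p" by simp
  have "y \<in> X \<longleftrightarrow> 2^p + 1 \<le> y*2^p \<and> y*2^p < 2^p + 2"
    unfolding X_def using pp by (auto simp: field_simps)
  also have "\<dots> \<longleftrightarrow> \<lfloor>y*2^p\<rfloor> = 2^p + 1" unfolding floor_eq_iff by (simp add: add.commute)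
  finally show ?thesis .
qed

lemma cell_p: "x \<in> X \<Longrightarrow> cell p x = X"
  by (auto simp: cell_iff X_floor)

lemma cell_sub: "x \<in> X \<Longrightarrow> p \<le> m \<Longrightarrow> cell m x \<subseteq> X"
  using cell_nest cell_p by blast

lemma lo_in_cell: "lo m x \<in> cell m x"
  by (simp add: cell_iff lo_def)

lemma lo_ge: "x \<in> X \<Longrightarrow> p \<le> m \<Longrightarrow> 1 + 1/2^p \<le> lo m x"
  using cell_sub lo_in_cell by (fastforce simp: X_def)

lemma hi_le: assumes "x \<in> X" "p \<le> m" shows "lo m x + 1/2^m \<le> 1 + 2/2^p"
proof -
  define N :: int where "N = 2^m + 2*2^(m-p)"
  have e: "(2::real)^m = 2^p * 2^(m-p)" using assms(2) by (metis le_add_diff_inverse power_add)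
  have "x*2^m < (1 + 2/2^p)*2^m" using assms(1) by (simp add: X_def)
  also have "(1 + 2/2^p)*2^m = (of_int N :: real)"
  proof -
    have "(of_int N :: real) = 2^m + 2*2^(m-p)" by (simp add: N_def)
    also have "\<dots> = (1 + 2/2^p)*2^m" unfolding e by (simp add: field_simps)
    finally show ?thesis by simp
  qed
  finally have "\<lfloor>x*2^m\<rfloor> < N" by (simp add: floor_less_iff)
  then have "of_int \<lfloor>x*2^m\<rfloor> + 1 \<le> (of_int N :: real)" by linarith
  then have "(of_int \<lfloor>x*2^m\<rfloor> + 1)/2^m \<le> (of_int N :: real)/2^m" by (simp add: divide_right_mono)
  also have "(of_int N :: real)/2^m = 1 + 2/2^p" using \<open>(1 + 2/2^p)*2^m = (of_int N :: real)\<close>[symmetric] by simp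
  finally show ?thesis by (simp add: lo_def add_divide_distrib)
qed

lemma lo_ge1: "x \<in> X \<Longrightarrow> p \<le> m \<Longrightarrow> 1 \<le> lo m x"
proof -
  assume "x \<in> X" "p \<le> m"
  from lo_ge[OF this] have "1 + 1/2^p \<le> lo m x" .
  moreover have "0 \<le> 1/(2::real)^p" by simp
  ultimately show ?thesis by linarith
qed

lemma img_lower: assumes "x \<in> X" "p \<le> m"
  shows "real k * (lo m x)^(k-1) * (1/2^m) \<le> img k m x" and "real k / 2^m \<le> img k m x"
proof -
  show 1: "real k * (lo m x)^(k-1) * (1/2^m) \<le> img k m x"
    unfolding img_def using pow_diff_lower[of "lo m x" "lo m x + 1/2^m" k] lo_ge1[OF assms] by simp
  have "1 \<le> (lo m x)^(k-1)" using lo_ge1[OF assms] by (simp add: one_le_power)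
  then have "real k * 1 * (1/2^m) \<le> real k * (lo m x)^(k-1) * (1/2^m)"
    by (intro mult_right_mono mult_left_mono) auto
  with 1 show "real k / 2^m \<le> img k m x" by simp
qed

lemma img_upper: assumes "x \<in> X" "p \<le> m"
  shows "img k m x \<le> real k * 2^k / 2^m"
proof -
  have h2: "lo m x + 1/2^m \<le> 2"
  proof -
    have "(2::real)^1 \<le> 2^p" by (rule power_increasing[OF p1]) simp
    then have "(2::real)/2^p \<le> 1" by simp
    then show ?thesis using hi_le[OF assms] by linarith
  qed
  have "img k m x \<le> real k * (lo m x + 1/2^m)^(k-1) * (1/2^m)"
    unfolding img_def using pow_diff_upper[of "lo m x" "lo m x + 1/2^m" k] lo_ge1[OF assms] by simp
  also have "\<dots> \<le> real k * 2^k * (1/2^m)"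
  proof -
    have "(lo m x + 1/2^m)^(k-1) \<le> 2^(k-1)" using h2 lo_ge1[OF assms] by (intro power_mono) auto
    also have "(2::real)^(k-1) \<le> 2^k" by (simp add: power_increasing)
    finally show ?thesis by (intro mult_right_mono mult_left_mono) auto
  qed
  finally show ?thesis by simp
qed

lemma img_mono: "x \<in> X \<Longrightarrow> p \<le> m \<Longrightarrow> i \<le> k \<Longrightarrow> img i m x \<le> img k m x"
  unfolding img_def using lo_ge1 by (intro pow_diff_mono_k) auto

definition lev where "lev k x = (LEAST m. p \<le> m \<and> img k m x \<le> eta)"

lemma exM: "\<exists>M\<ge>p. real k * 2^k / 2^M \<le> eta"
proof -
  obtain n where n: "real k * 2^k / eta < 2^n" using real_arch_pow[of 2] by auto
  define M where "M = max p n"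
  have "(2::real)^n \<le> 2^M" by (simp add: M_def power_increasing)
  then have "real k * 2^k / eta \<le> 2^M" using n by linarith
  then have "real k * 2^k / 2^M \<le> eta" using eta_pos by (simp add: field_simps)
  then show ?thesis by (intro exI[of _ M]) (simp add: M_def)
qed

lemma lev_ex: assumes "x \<in> X" shows "\<exists>m. p \<le> m \<and> img k m x \<le> eta"
proof -
  obtain M where M: "p \<le> M" "real k * 2^k / 2^M \<le> eta" using exM by blast
  have "img k M x \<le> eta" using img_upper[OF assms M(1), of k] M(2) by linarith
  then show ?thesis using M(1) by blast
qed

lemma lev_spec: "x \<in> X \<Longrightarrow> p \<le> lev k x \<and> img k (lev k x) x \<le> eta"
  unfolding lev_def by (rule LeastI_ex) (rule lev_ex)

lemma lev_le: "p \<le> m \<Longrightarrow> img k m x \<le> eta \<Longrightarrow> lev k x \<le> m"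
  unfolding lev_def by (rule Least_le) simp

lemma lev_min: "p \<le> m \<Longrightarrow> m < lev k x \<Longrightarrow> eta < img k m x"
  unfolding lev_def using not_less_Least by force

lemma lev_bound: "\<exists>M. \<forall>x\<in>X. lev k x \<le> M"
proof -
  obtain M where M: "p \<le> M" "real k * 2^k / 2^M \<le> eta" using exM by blast
  have "lev k x \<le> M" if "x \<in> X" for x
    using img_upper[OF that M(1), of k] M by (intro lev_le) auto
  then show ?thesis by blast
qed

lemma lev_bound_all: "\<exists>M. \<forall>k\<le>n. \<forall>x\<in>X. lev k x \<le> M"
proof (induction n)
  case 0 then show ?case using lev_bound[of 0] by auto
next
  case (Suc n)
  then obtain M1 where M1: "\<forall>k\<le>n. \<forall>x\<in>X. lev k x \<le> M1" by blast
  obtain M2 where M2: "\<forall>x\<in>X. lev (Suc n) x \<le> M2" using lev_bound by blast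
  have "lev k x \<le> max M1 M2" if "k \<le> Suc n" "x \<in> X" for k x
  proof (cases "k = Suc n")
    case True then show ?thesis using M2 that by fastforce
  next
    case False then have "k \<le> n" using that by simp
    then show ?thesis using M1 that by fastforce
  qed
  then show ?case by blast
qed

lemma lev_gt_p: assumes "x \<in> X" "1 \<le> k" shows "p < lev k x"
proof -
  have "1/2^p \<le> real k / 2^p" using assms(2) by (simp add: divide_right_mono)
  also have "\<dots> \<le> img k p x" using img_lower(2)[OF assms(1), of p k] by simp
  finally have "eta < img k p x" using eta_a by linarith
  moreover have "p \<le> lev k x" using lev_spec[OF assms(1)] by simp
  moreover have "lev k x \<noteq> p" using lev_spec[OF assms(1), of k] \<open>eta < img k p x\<close> by auto
  ultimately show ?thesis by simp
qed

lemma lev_mono: assumes "x \<in> X" "i \<le> k" shows "lev i x \<le> lev k x"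
proof -
  have a: "p \<le> lev k x" "img k (lev k x) x \<le> eta" using lev_spec[OF assms(1), of k] by auto
  have "img i (lev k x) x \<le> img k (lev k x) x" by (rule img_mono[OF assms(1) a(1) assms(2)])
  then show ?thesis using a by (intro lev_le) auto
qed

lemma lev_const: assumes "x \<in> X" "i \<le> k" "y \<in> cell (lev k x) x" shows "lev i y = lev i x"
proof -
  have same: "img i m y = img i m x" if "m \<le> lev k x" for m
    using cell_nest[OF that assms(3)] by (rule cell_img)
  have li: "lev i x \<le> lev k x" by (rule lev_mono[OF assms(1,2)])
  have "lev i y \<le> lev i x" using lev_spec[OF assms(1), of i] same[OF li] by (intro lev_le) auto
  moreover have "lev i x \<le> lev i y"
  proof (rule ccontr)
    assume "\<not> lev i x \<le> lev i y"
    then have lt: "lev i y < lev i x" by simp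
    have yX: "y \<in> X" using cell_sub[OF assms(1)] lev_spec[OF assms(1), of k] assms(3) by blast
    have "img i (lev i y) y \<le> eta" "p \<le> lev i y" using lev_spec[OF yX] by auto
    moreover have "img i (lev i y) y = img i (lev i y) x" using lt li by (intro same) simp
    ultimately show False using lev_min[of "lev i y" i x] lt by simp
  qed
  ultimately show ?thesis by simp
qed

definition S where "S n = {x\<in>X. \<forall>k\<in>{1..n}. \<forall>y\<in>cell (lev k x) x. eta \<le> dist_int (y^k)}"

lemma S_sub: "S n \<subseteq> X" by (auto simp: S_def)
lemma S_0: "S 0 = X" by (auto simp: S_def)
lemma S_anti: "n \<le> n' \<Longrightarrow> S n' \<subseteq> S n" by (auto simp: S_def)

lemma S_cell: assumes "x \<in> S n" "n \<le> k" "y \<in> cell (lev k x) x" shows "y \<in> S n"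
proof -
  have xX: "x \<in> X" using assms(1) S_sub by blast
  have yX: "y \<in> X" using cell_sub[OF xX] lev_spec[OF xX, of k] assms(3) by blast
  show ?thesis unfolding S_def
  proof (intro CollectI conjI ballI yX)
    fix i z assume i: "i \<in> {1..n}" and z: "z \<in> cell (lev i y) y"
    have ik: "i \<le> k" using i assms(2) by simp
    have ly: "lev i y = lev i x" by (rule lev_const[OF xX ik assms(3)])
    have "y \<in> cell (lev i x) x" using cell_nest[OF lev_mono[OF xX ik] assms(3)] .
    then have "cell (lev i x) y = cell (lev i x) x" by (rule cell_eq)
    then have "z \<in> cell (lev i x) x" using z ly by simp
    then show "eta \<le> dist_int (z^i)" using assms(1) i by (auto simp: S_def)
  qed
qed

lemma S_cell_rev: assumes "x \<in> X" "n \<le> k" "y \<in> cell (lev k x) x" "y \<in> S n" shows "x \<in> S n"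
proof -
  have "lev k y = lev k x" by (rule lev_const[OF assms(1) order_refl assms(3)])
  then have "x \<in> cell (lev k y) y" using cell_sym[OF assms(3)] by simp
  then show ?thesis by (rule S_cell[OF assms(4) assms(2)])
qed

lemma S_diff: assumes "x \<in> S n" "x \<notin> S (Suc n)" shows "dist_int (x^(Suc n)) < 2*eta"
proof -
  have xX: "x \<in> X" using assms(1) S_sub by blast
  obtain k y where k: "k \<in> {1..Suc n}" and y: "y \<in> cell (lev k x) x" and d: "dist_int (y^k) < eta"
    using assms xX by (auto simp: S_def not_le)
  have kn: "k = Suc n"
  proof (rule ccontr)
    assume "k \<noteq> Suc n"
    then have "k \<in> {1..n}" using k by auto
    then have "eta \<le> dist_int (y^k)" using assms(1) y by (auto simp: S_def)
    with d show False by simp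
  qed
  define m where "m = lev (Suc n) x"
  have pm: "p \<le> m" and im: "img (Suc n) m x \<le> eta" using lev_spec[OF xX] by (auto simp: m_def)
  have u1: "1 \<le> lo m x" by (rule lo_ge1[OF xX pm])
  have "x \<in> cell m x" "y \<in> cell m x" using y kn by (auto simp: m_def cell_self)
  then have xr: "lo m x \<le> x" "x < lo m x + 1/2^m" and yr: "lo m x \<le> y" "y < lo m x + 1/2^m"
    by (auto simp: cell_def)
  have "lo m x ^ Suc n \<le> x ^ Suc n" "x ^ Suc n \<le> (lo m x + 1/2^m) ^ Suc n"
    using xr u1 by (intro power_mono; linarith)+
  moreover have "lo m x ^ Suc n \<le> y ^ Suc n" "y ^ Suc n \<le> (lo m x + 1/2^m) ^ Suc n"
    using yr u1 by (intro power_mono; linarith)+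
  ultimately have "\<bar>x^Suc n - y^Suc n\<bar> \<le> eta" using im unfolding img_def by linarith
  then show ?thesis using dist_int_lip[of "x^Suc n" "y^Suc n"] d[unfolded kn] by linarith
qed

end



context cset begin

definition B2 where "B2 n = {x. dist_int (x^n) < 2*eta}"

lemma B2_meas[measurable]: "B2 n \<in> sets lborel"
  unfolding B2_def by measurable

lemma X_Icc: "X \<subseteq> {1..2}"
proof -
  have "(2::real)^1 \<le> 2^p" by (rule power_increasing[OF p1]) simp
  then have "(2::real)/2^p \<le> 1" by simp
  moreover have "0 \<le> 1/(2::real)^p" by simp
  ultimately show ?thesis unfolding X_def
    by (intro subsetI) (simp only: atLeastLessThan_iff atLeastAtMost_iff; linarith)
qed

lemma X_meas[measurable]: "X \<in> sets lborel" unfolding X_def by simp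

lemma fmX: "A \<subseteq> X \<Longrightarrow> A \<in> sets lborel \<Longrightarrow> A \<in> fmeasurable lborel"
  using X_Icc by (intro fmeas_bounded[of A 1 2]) auto

lemma measure_X: "measure lborel X = 1/2^p"
proof -
  have le: "1 + 1/2^p \<le> 1 + 2/(2::real)^p" by (simp add: divide_right_mono)
  have "measure lborel X = (1 + 2/2^p) - (1 + 1/(2::real)^p)" unfolding X_def by (rule measure_lborel_Ico[OF le])
  also have "\<dots> = 1/2^p" by (simp add: diff_divide_distrib[symmetric])
  finally show ?thesis .
qed

lemma cell_expl: "cell m x = {of_int \<lfloor>x*2^m\<rfloor>/2^m ..< (of_int \<lfloor>x*2^m\<rfloor> + 1)/2^m}"
  by (simp add: cell_def lo_def add_divide_distrib)

lemma cell_meas[measurable]: "cell m x \<in> sets lborel"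
  by (simp add: cell_def)

lemma measure_cell: "measure lborel (cell m x) = 1/2^m"
  by (simp add: cell_def measure_lborel_Ico)

lemma S_meas[measurable]: "S n \<in> sets lborel"
proof -
  obtain M0 where M0: "\<forall>k\<le>n. \<forall>x\<in>X. lev k x \<le> M0" using lev_bound_all by blast
  define M where "M = max M0 p"
  define cI where "cI i = {of_int i/2^M ..< (of_int i + 1)/(2::real)^M}" for i :: int
  define I where "I = (\<lambda>x. \<lfloor>x*2^M\<rfloor>) ` S n"
  have eq: "S n = (\<Union>i\<in>I. cI i)"
  proof
    show "S n \<subseteq> (\<Union>i\<in>I. cI i)"
    proof
      fix x assume x: "x \<in> S n"
      have "x \<in> cell M x" by (rule cell_self)
      then show "x \<in> (\<Union>i\<in>I. cI i)" using x unfolding I_def cI_def cell_expl by blast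
    qed
    show "(\<Union>i\<in>I. cI i) \<subseteq> S n"
    proof
      fix y assume "y \<in> (\<Union>i\<in>I. cI i)"
      then obtain x where x: "x \<in> S n" and y: "y \<in> cell M x" unfolding I_def cI_def cell_expl by blast
      have xX: "x \<in> X" using x S_sub by blast
      have "lev n x \<le> M" using M0 xX by (simp add: M_def le_max_iff_disj)
      then have "y \<in> cell (lev n x) x" using cell_nest y by blast
      then show "y \<in> S n" by (rule S_cell[OF x order_refl])
    qed
  qed
  have fin: "finite I"
  proof -
    have "I \<subseteq> {0..2^(M+1)}"
    proof
      fix i assume "i \<in> I"
      then obtain x where x: "x \<in> S n" and i: "i = \<lfloor>x*2^M\<rfloor>" unfolding I_def by blast
      have "x \<in> {1..2}" using x S_sub X_Icc by blast
      then have a: "0 \<le> x*2^M" "x*2^M \<le> 2*2^M" by (auto intro: mult_right_mono)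
      have "0 \<le> i" unfolding i using a by simp
      moreover have "i \<le> 2^(M+1)"
      proof -
        have e: "(of_int (2^(M+1)::int)::real) = 2*2^M" by simp
        have "x*2^M < of_int (2^(M+1)::int) + 1" using a(2) e by linarith
        then show ?thesis unfolding i by (simp only: floor_le_iff)
      qed
      ultimately show "i \<in> {0..2^(M+1)}" by simp
    qed
    then show ?thesis by (rule finite_subset) simp
  qed
  show ?thesis unfolding eq cI_def using fin by (intro sets.finite_UN) auto
qed

lemma fmS: "S n \<inter> A \<in> sets lborel \<Longrightarrow> S n \<inter> A \<in> fmeasurable lborel"
  using S_sub by (intro fmX) auto

lemma Pcell:
  assumes xX: "x \<in> X" and j1: "1 \<le> j"
  shows "measure lborel (B2 (j+L) \<inter> cell (lev j x) x) \<le> 30*eta*(1/2^(lev j x))"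
proof -
  define m where "m = lev j x"
  define n where "n = j + L"
  have pm: "p < m" using lev_gt_p[OF xX j1] by (simp add: m_def)
  have imj: "img j m x \<le> eta" using lev_spec[OF xX] by (simp add: m_def)
  obtain m' where mm: "m = Suc m'" using pm by (cases m) auto
  have pm': "p \<le> m'" using pm mm by simp
  have par: "eta < img j m' x" using lev_min[of m' j x] pm' mm by (simp add: m_def)
  define u where "u = lo m x"
  define h where "h = 1/(2::real)^m"
  define u' where "u' = lo m' x"
  have h0: "0 < h" by (simp add: h_def)
  have hh: "1/(2::real)^m' = 2*h" by (simp add: h_def mm)
  have a0: "0 \<le> 1/(2::real)^p" by simp
  have u1: "1 \<le> u" using lo_ge1[OF xX, of m] pm by (simp add: u_def)
  have u'1: "1 \<le> u'" using lo_ge1[OF xX pm'] by (simp add: u'_def)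
  have u'a: "1 + 1/2^p \<le> u'" using lo_ge[OF xX pm'] by (simp add: u'_def)
  have rel: "u' \<le> u \<and> u + h \<le> u' + 2*h"
  proof -
    define i where "i = \<lfloor>x*2^m\<rfloor>"
    have i': "\<lfloor>x*2^m'\<rfloor> = i div 2" using floor_nest[of m' m x] mm by (simp add: i_def)
    have u_eq: "u = of_int i / 2^m" by (simp add: u_def lo_def i_def)
    have u'_eq: "u' = of_int (2*(i div 2)) / 2^m" by (simp add: u'_def lo_def i' mm)
    have d1: "2*(i div 2) \<le> i" "i + 1 \<le> 2*(i div 2) + 2" by presburger+
    have r1: "(of_int (2*(i div 2)) :: real) \<le> of_int i" using d1(1) by (simp only: of_int_le_iff)
    have r2': "(of_int (i+1) :: real) \<le> of_int (2*(i div 2) + 2)" using d1(2) by (simp only: of_int_le_iff)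
    have r2: "(of_int i :: real) + 1 \<le> of_int (2*(i div 2)) + 2" using r2' by simp
    have "u' \<le> u" unfolding u_eq u'_eq using r1 by (simp add: divide_right_mono)
    moreover have "u + h \<le> u' + 2*h"
    proof -
      have "u + h = (of_int i + 1)/2^m" by (simp add: u_eq h_def add_divide_distrib)
      also have "\<dots> \<le> (of_int (2*(i div 2)) + 2)/2^m" using r2 by (simp add: divide_right_mono)
      also have "\<dots> = u' + 2*h" by (simp add: u'_eq h_def add_divide_distrib)
      finally show ?thesis .
    qed
    ultimately show ?thesis by simp
  qed
  have jh: "real j * h \<le> eta" using img_lower(2)[OF xX, of m j] pm imj by (simp add: h_def)
  have hle: "h \<le> eta" using jh j1 h0 by (smt (verit) mult_le_cancel_right1 of_nat_1 of_nat_mono)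
  have pb: "img j m' x \<le> real j * (u' + 2*h)^(j-1) * (2*h)"
    unfolding img_def u'_def[symmetric] hh using pow_diff_upper[of u' "u'+2*h" j] u'1 h0 by simp
  have t1: "(u' + 2*h)^(j-1) \<le> u'^(j-1) * 2"
  proof -
    have "u' + 2*h \<le> u'*(1+2*h)" using u'1 h0 by (simp add: algebra_simps)
    then have "(u' + 2*h)^(j-1) \<le> (u'*(1+2*h))^(j-1)" using u'1 h0 by (intro power_mono) auto
    also have "\<dots> = u'^(j-1) * (1+2*h)^(j-1)" by (simp add: power_mult_distrib)
    also have "(1+2*h)^(j-1) \<le> 2"
    proof (rule pow_small_le2)
      have "real (j-1) * (2*h) \<le> real j * (2*h)" using h0 by (intro mult_right_mono) auto
      also have "\<dots> \<le> 1/2" using jh eta_small by linarith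
      finally show "real (j-1) * (2*h) \<le> 1/2" .
    qed (use h0 in simp)
    then have "u'^(j-1) * (1+2*h)^(j-1) \<le> u'^(j-1) * 2" using u'1 by (intro mult_left_mono) auto
    finally show ?thesis .
  qed
  define K where "K = real j * h * u'^(j-1)"
  have K: "eta < 4*K"
  proof -
    have "real j * (u' + 2*h)^(j-1) * (2*h) \<le> real j * (u'^(j-1) * 2) * (2*h)"
      using t1 h0 by (intro mult_right_mono mult_left_mono) auto
    also have "\<dots> = 4*K" by (simp add: K_def algebra_simps)
    finally show ?thesis using par pb by linarith
  qed
  have uL: "8/eta \<le> u'^L"
  proof -
    have "(1 + 1/2^p)^L \<le> u'^L" using u'a a0 by (intro power_mono) auto
    then show ?thesis using L_big by linarith
  qed
  have img_lo: "2 \<le> (u+h)^n - u^n"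
  proof -
    have "real n * u^(n-1) * h \<le> (u+h)^n - u^n" using pow_diff_lower[of u "u+h" n] u1 h0 by simp
    moreover have "real j * u'^(n-1) * h \<le> real n * u^(n-1) * h"
    proof -
      have "u'^(n-1) \<le> u^(n-1)" using rel u'1 by (intro power_mono) auto
      moreover have "real j \<le> real n" by (simp add: n_def)
      ultimately show ?thesis using h0 u'1 by (intro mult_right_mono mult_mono) auto
    qed
    moreover have "u'^(n-1) = u'^(j-1) * u'^L" using j1 by (simp add: n_def power_add[symmetric])
    moreover have "2 \<le> K * u'^L"
    proof -
      have "(eta/4) * (8/eta) \<le> K * u'^L"
        using K uL eta_pos by (intro mult_mono) auto
      then show ?thesis using eta_pos by simp
    qed
    ultimately show ?thesis unfolding K_def by (simp add: algebra_simps)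
  qed
  have inv: "1/(real n * u^(n-1)) \<le> h"
  proof -
    have "(u+h)^n - u^n \<le> real n * (u+h)^(n-1) * h" using pow_diff_upper[of u "u+h" n] u1 h0 by simp
    moreover have "(u+h)^(n-1) \<le> u^(n-1) * 2"
    proof -
      have "u + h \<le> u*(1+h)" using u1 h0 by (simp add: algebra_simps)
      then have "(u + h)^(n-1) \<le> (u*(1+h))^(n-1)" using u1 h0 by (intro power_mono) auto
      also have "\<dots> = u^(n-1) * (1+h)^(n-1)" by (simp add: power_mult_distrib)
      also have "(1+h)^(n-1) \<le> 2"
      proof (rule pow_small_le2)
        have "real (n-1) * h \<le> real n * h" using h0 by (intro mult_right_mono) auto
        also have "\<dots> = real j * h + real L * h" by (simp add: n_def algebra_simps)
        also have "\<dots> \<le> eta + real L * eta" using jh hle by (intro add_mono mult_left_mono) auto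
        also have "\<dots> \<le> 1/2" using etaL by (simp add: algebra_simps)
        finally show "real (n-1) * h \<le> 1/2" .
      qed (use h0 in simp)
      then have "u^(n-1) * (1+h)^(n-1) \<le> u^(n-1) * 2" using u1 by (intro mult_left_mono) auto
      finally show ?thesis .
    qed
    ultimately have "2 \<le> real n * (u^(n-1) * 2) * h"
      using img_lo h0 by (smt (verit) mult_left_mono mult_right_mono of_nat_0_le_iff)
    then have "1 \<le> real n * u^(n-1) * h" by simp
    moreover have "0 < real n * u^(n-1)" using u1 j1 by (simp add: n_def)
    ultimately show ?thesis by (simp add: field_simps)
  qed
  have seteq: "B2 n \<inter> cell m x = {y\<in>{u..<u+h}. dist_int (y^n) < 2*eta}"
    by (auto simp: B2_def cell_def u_def h_def)
  have "measure lborel {y\<in>{u..<u+h}. dist_int (y^n) < 2*eta} \<le> 3*(2*eta)*((u+h)-u) + 12*(2*eta)/(real n * u^(n-1))"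
    using u1 h0 j1 eta_pos eta_small by (intro L1) (auto simp: n_def)
  also have "12*(2*eta)/(real n * u^(n-1)) = 24*eta*(1/(real n * u^(n-1)))" by simp
  also have "\<dots> \<le> 24*eta*h" using inv eta_pos by (intro mult_left_mono) auto
  finally have "measure lborel (B2 n \<inter> cell m x) \<le> 30*eta*h" unfolding seteq by simp
  then show ?thesis by (simp add: m_def n_def h_def)
qed

end



lemma lo_child0: "lo (Suc m) (lo m x) = lo m x"
proof -
  have "lo m x * 2^Suc m = of_int (2*\<lfloor>x*2^m\<rfloor>)" by (simp add: lo_def)
  then show ?thesis unfolding lo_def[of "Suc m" "lo m x"] by (simp add: lo_def)
qed

lemma lo_child1: "lo (Suc m) (lo m x + 1/2^Suc m) = lo m x + 1/2^Suc m"
proof -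
  have "(lo m x + 1/2^Suc m) * 2^Suc m = of_int (2*\<lfloor>x*2^m\<rfloor> + 1)" by (simp add: lo_def distrib_right)
  then show ?thesis unfolding lo_def[of "Suc m" "lo m x + 1/2^Suc m"]
    by (simp add: lo_def add_divide_distrib)
qed

lemma cell_children:
  "cell m x = cell (Suc m) (lo m x) \<union> cell (Suc m) (lo m x + 1/2^Suc m)"
  "cell (Suc m) (lo m x) \<inter> cell (Suc m) (lo m x + 1/2^Suc m) = {}"
proof -
  have e: "(1::real)/2^m = 1/2^Suc m + 1/2^Suc m" by simp
  show "cell m x = cell (Suc m) (lo m x) \<union> cell (Suc m) (lo m x + 1/2^Suc m)"
    unfolding cell_def lo_child0 lo_child1 e by auto
  show "cell (Suc m) (lo m x) \<inter> cell (Suc m) (lo m x + 1/2^Suc m) = {}"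
    unfolding cell_def lo_child0 lo_child1 by auto
qed

context cset begin

lemma fin_em: "A \<subseteq> X \<Longrightarrow> A \<in> sets lborel \<Longrightarrow> emeasure lborel A \<noteq> \<infinity>"
  using fmX[of A] by (auto simp: fmeasurable_def)

lemma Qlem: assumes j1: "1 \<le> j"
  shows "measure lborel (S j \<inter> B2 (j+L)) \<le> 30*eta*measure lborel (S j)"
proof -
  obtain M where M: "\<forall>x\<in>X. lev j x \<le> M" using lev_bound by blast
  define n where "n = j + L"
  define f where "f T = measure lborel (S j \<inter> B2 n \<inter> T)" for T
  define g where "g T = measure lborel (S j \<inter> T)" for T
  have split: "f (A \<union> B) = f A + f B \<and> g (A \<union> B) = g A + g B"
    if AB: "A \<inter> B = {}" "A \<in> sets lborel" "B \<in> sets lborel" for A B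
  proof -
    have e1: "S j \<inter> B2 n \<inter> (A \<union> B) = (S j \<inter> B2 n \<inter> A) \<union> (S j \<inter> B2 n \<inter> B)" by auto
    have e2: "S j \<inter> (A \<union> B) = (S j \<inter> A) \<union> (S j \<inter> B)" by auto
    have "f (A \<union> B) = f A + f B" unfolding f_def e1
      using AB S_sub by (intro measure_Union fin_em) auto
    moreover have "g (A \<union> B) = g A + g B" unfolding g_def e2
      using AB S_sub by (intro measure_Union fin_em) auto
    ultimately show ?thesis by simp
  qed
  have base: "f (cell m x) \<le> 30*eta*g (cell m x)" if xX: "x \<in> X" and mj: "m = lev j x" for m x
  proof (cases "x \<in> S j")
    case True
    have sub: "cell m x \<subseteq> S j" using S_cell[OF True order_refl] mj by blast
    have "S j \<inter> B2 n \<inter> cell m x = B2 (j+L) \<inter> cell (lev j x) x" using sub mj unfolding n_def by blast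
    then have "f (cell m x) = measure lborel (B2 (j+L) \<inter> cell (lev j x) x)"
      unfolding f_def by simp
    also have "\<dots> \<le> 30*eta*(1/2^(lev j x))" by (rule Pcell[OF xX j1])
    also have "1/2^(lev j x) = g (cell m x)"
      unfolding g_def using sub mj by (simp add: Int_absorb1 measure_cell)
    finally show ?thesis .
  next
    case False
    have "S j \<inter> cell m x = {}" using S_cell_rev[OF xX order_refl] False mj by blast
    then have "S j \<inter> B2 n \<inter> cell m x = {}" "S j \<inter> cell m x = {}" by auto
    then have "f (cell m x) = 0" "g (cell m x) = 0" unfolding f_def g_def by simp_all
    then show ?thesis by simp
  qed
  have main: "\<forall>m x. x \<in> X \<longrightarrow> p \<le> m \<longrightarrow> m \<le> lev j x \<longrightarrow> M - m = d \<longrightarrow>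
      f (cell m x) \<le> 30*eta*g (cell m x)" for d
  proof (induction d)
    case 0
    show ?case
    proof (intro allI impI)
      fix m x assume a: "x \<in> X" "p \<le> m" "m \<le> lev j x" "M - m = 0"
      have "m = lev j x" using a M by force
      then show "f (cell m x) \<le> 30*eta*g (cell m x)" by (rule base[OF a(1)])
    qed
  next
    case (Suc d)
    show ?case
    proof (intro allI impI)
      fix m x assume a: "x \<in> X" "p \<le> m" "m \<le> lev j x" "M - m = Suc d"
      show "f (cell m x) \<le> 30*eta*g (cell m x)"
      proof (cases "m = lev j x")
        case True then show ?thesis by (rule base[OF a(1)])
      next
        case False
        then have ml: "m < lev j x" using a by simp
        define x0 where "x0 = lo m x"
        define x1 where "x1 = lo m x + 1/2^Suc m"
        have in0: "x0 \<in> cell m x" unfolding x0_def by (rule lo_in_cell)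
        have in1: "x1 \<in> cell m x" unfolding x1_def cell_def by (simp add: divide_strict_left_mono)
        have cs: "cell m x \<subseteq> X" by (rule cell_sub[OF a(1,2)])
        have levc: "Suc m \<le> lev j y" if y: "y \<in> cell m x" for y
        proof (rule ccontr)
          assume "\<not> Suc m \<le> lev j y"
          then have ly: "lev j y \<le> m" by simp
          have yX: "y \<in> X" using cs y by blast
          have sp: "p \<le> lev j y" "img j (lev j y) y \<le> eta" using lev_spec[OF yX] by auto
          have "y \<in> cell (lev j y) x" by (rule cell_nest[OF ly y])
          then have "img j (lev j y) y = img j (lev j y) x" by (rule cell_img)
          moreover have "eta < img j (lev j y) x" using lev_min[OF sp(1)] ly ml by simp
          ultimately show False using sp by simp
        qed
        have x0X: "x0 \<in> X" and x1X: "x1 \<in> X" using cs in0 in1 by auto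
        have ih0: "f (cell (Suc m) x0) \<le> 30*eta*g (cell (Suc m) x0)"
          using Suc.IH x0X a levc[OF in0] by simp
        have ih1: "f (cell (Suc m) x1) \<le> 30*eta*g (cell (Suc m) x1)"
          using Suc.IH x1X a levc[OF in1] by simp
        have cu: "cell m x = cell (Suc m) x0 \<union> cell (Suc m) x1"
          unfolding x0_def x1_def by (rule cell_children(1))
        have dj: "cell (Suc m) x0 \<inter> cell (Suc m) x1 = {}"
          unfolding x0_def x1_def by (rule cell_children(2))
        have sp: "f (cell m x) = f (cell (Suc m) x0) + f (cell (Suc m) x1)"
             "g (cell m x) = g (cell (Suc m) x0) + g (cell (Suc m) x1)"
          using split[OF dj cell_meas cell_meas] cu by auto
        show ?thesis unfolding sp using ih0 ih1 by (simp add: distrib_left)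
      qed
    qed
  qed
  define xs where "xs = 1 + 1/(2::real)^p"
  have xsX: "xs \<in> X" unfolding xs_def X_def by (simp add: divide_strict_right_mono)
  have "f (cell p xs) \<le> 30*eta*g (cell p xs)"
    using main[of "M - p"] xsX lev_spec[OF xsX, of j] by simp
  moreover have "cell p xs = X" by (rule cell_p[OF xsX])
  ultimately have "measure lborel (S j \<inter> B2 n \<inter> X) \<le> 30*eta*measure lborel (S j \<inter> X)"
    by (simp add: f_def g_def)
  moreover have "S j \<inter> B2 n \<inter> X = S j \<inter> B2 n" "S j \<inter> X = S j" using S_sub by auto
  ultimately show ?thesis by (simp add: n_def)
qed

end



context cset begin

lemma S_meas_b[simp]: "S n \<in> sets borel" using S_meas by simp
lemma X_meas_b[simp]: "X \<in> sets borel" using X_meas by simp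
lemma B2_meas_b[simp]: "B2 n \<in> sets borel" using B2_meas by simp

lemma L1pos: "1 \<le> L"
proof (rule ccontr)
  assume "\<not> 1 \<le> L"
  then have "L = 0" by simp
  then have "8/eta \<le> 1" using L_big by simp
  then have "8 \<le> eta" using eta_pos by (simp add: field_simps)
  then show False using eta_small by simp
qed

lemma step_ineq: "measure lborel (S n) \<le> measure lborel (S (Suc n)) + measure lborel (S n \<inter> B2 (Suc n))"
proof -
  have sub: "S n \<subseteq> S (Suc n) \<union> (S n \<inter> B2 (Suc n))"
    using S_diff by (auto simp: B2_def)
  have "measure lborel (S n) \<le> measure lborel (S (Suc n) \<union> (S n \<inter> B2 (Suc n)))"
    using S_sub by (intro measure_mono_fmeasurable[OF sub] S_meas fmX) auto
  also have "\<dots> \<le> measure lborel (S (Suc n)) + measure lborel (S n \<inter> B2 (Suc n))"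
    by (intro measure_Un_le) auto
  finally show ?thesis .
qed

lemma early_step: "measure lborel (S n \<inter> B2 (Suc n)) \<le> 6*eta*(1/2^p) + 24*eta/real (Suc n)"
proof -
  define lo' where "lo' = 1 + 1/(2::real)^p"
  define hi' where "hi' = 1 + 2/(2::real)^p"
  have le: "lo' \<le> hi'" by (simp add: lo'_def hi'_def divide_right_mono)
  have sub: "S n \<inter> B2 (Suc n) \<subseteq> {x\<in>{lo'..<hi'}. dist_int (x^Suc n) < 2*eta}"
  proof
    fix x assume x: "x \<in> S n \<inter> B2 (Suc n)"
    then have "x \<in> X" using S_sub by blast
    then show "x \<in> {x\<in>{lo'..<hi'}. dist_int (x^Suc n) < 2*eta}"
      using x by (simp add: B2_def X_def lo'_def hi'_def)
  qed
  have "measure lborel (S n \<inter> B2 (Suc n)) \<le> measure lborel {x\<in>{lo'..<hi'}. dist_int (x^Suc n) < 2*eta}"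
    by (rule measure_mono_fmeasurable[OF sub]) (auto intro!: fmeas_bounded[of _ lo' hi'])
  also have "\<dots> \<le> 3*(2*eta)*(hi'-lo') + 12*(2*eta)/(real (Suc n) * lo'^(Suc n - 1))"
    using le eta_pos eta_small by (intro L1) (auto simp: lo'_def)
  also have "hi' - lo' = 1/2^p" by (simp add: hi'_def lo'_def diff_divide_distrib[symmetric])
  also have "12*(2*eta)/(real (Suc n) * lo'^(Suc n - 1)) \<le> 24*eta/real (Suc n)"
  proof -
    have "1 \<le> lo'^n" unfolding lo'_def by (simp add: one_le_power)
    then have "real (Suc n) * 1 \<le> real (Suc n) * lo'^n" by (intro mult_left_mono) auto
    then show ?thesis using eta_pos by (simp add: frac_le)
  qed
  finally show ?thesis by simp
qed

lemma late_step: assumes "L \<le> n"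
  shows "measure lborel (S n \<inter> B2 (Suc n)) \<le> 30*eta*measure lborel (S (Suc n - L))"
proof -
  define j where "j = Suc n - L"
  have j1: "1 \<le> j" using assms by (simp add: j_def)
  have jn: "j \<le> n" using L1pos assms by (simp add: j_def)
  have e: "Suc n = j + L" using assms by (simp add: j_def)
  have "S n \<inter> B2 (Suc n) \<subseteq> S j \<inter> B2 (j+L)" using S_anti[OF jn] e by auto
  then have "measure lborel (S n \<inter> B2 (Suc n)) \<le> measure lborel (S j \<inter> B2 (j+L))"
    using S_sub by (intro measure_mono_fmeasurable fmX) auto
  also have "\<dots> \<le> 30*eta*measure lborel (S j)" by (rule Qlem[OF j1])
  finally show ?thesis by (simp add: j_def)
qed

definition A where "A n = measure lborel (S n)"

lemma A_le: "A n \<le> 1/2^p"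
  unfolding A_def measure_X[symmetric] using S_sub by (intro measure_mono_fmeasurable fmX) auto

lemma A_nonneg: "0 \<le> A n" by (simp add: A_def)

lemma A_anti: "n \<le> n' \<Longrightarrow> A n' \<le> A n"
  unfolding A_def using S_anti S_sub by (intro measure_mono_fmeasurable fmX) auto

lemma A_0: "A 0 = 1/2^p" by (simp add: A_def S_0 measure_X)

lemma early_total: "N \<le> L \<Longrightarrow> 1/2^p - (\<Sum>n<N. 6*eta*(1/2^p) + 24*eta/real (Suc n)) \<le> A N"
proof (induction N)
  case 0 then show ?case by (simp add: A_0)
next
  case (Suc N)
  have "A N \<le> A (Suc N) + (6*eta*(1/2^p) + 24*eta/real (Suc N))"
    using step_ineq[of N] early_step[of N] unfolding A_def by linarith
  then show ?case using Suc by simp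
qed

lemma AL: "1/2^p/2 \<le> A L"
proof -
  have "(\<Sum>n<L. 6*eta*(1/2^p) + 24*eta/real (Suc n)) = 6*eta*(1/2^p)*real L + 24*eta*(\<Sum>n\<in>{1..L}. 1/real n)"
    by (simp add: sum.distrib sum_distrib_left sum.atLeast1_atMost_eq)
  then show ?thesis using early_total[of L] early by simp
qed

definition rho where "rho = 1 - 120*eta"

lemma rho_pos: "0 < rho" and rho_le: "rho \<le> 1" using rho1 eta_pos by (auto simp: rho_def)

lemma chain: assumes H: "\<forall>k. L \<le> k \<and> k < n \<longrightarrow> rho * A k \<le> A (Suc k)" and "L \<le> j" "j \<le> n"
  shows "rho^(n-j) * A j \<le> A n"
  using assms(3,1)
proof (induction n rule: dec_induct)
  case base then show ?case by simp
next
  case (step n)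
  have "rho^(Suc n - j) * A j = rho * (rho^(n-j) * A j)" using step.hyps by (simp add: Suc_diff_le)
  also have "\<dots> \<le> rho * A n" using step rho_pos by (intro mult_left_mono) auto
  also have "\<dots> \<le> A (Suc n)" using step.prems step.hyps assms(2) by auto
  finally show ?case .
qed

lemma rhoL: "k \<le> L \<Longrightarrow> 1/2 \<le> rho^k"
  using rho rho_pos rho_le power_decreasing[of k L rho] by (simp add: rho_def)

lemma rec: "L \<le> n \<Longrightarrow> rho * A n \<le> A (Suc n)"
proof (induction n rule: less_induct)
  case (less n)
  have H: "\<forall>k. L \<le> k \<and> k < n \<longrightarrow> rho * A k \<le> A (Suc k)" using less.IH by blast
  define j where "j = Suc n - L"
  have Aj: "A j \<le> 4 * A n"
  proof (cases "L \<le> j")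
    case True
    have jn: "j \<le> n" using L1pos less.prems by (simp add: j_def)
    have "rho^(n-j) * A j \<le> A n" by (rule chain[OF H True jn])
    moreover have "1/2 \<le> rho^(n-j)" using less.prems by (intro rhoL) (simp add: j_def)
    ultimately have "1/2 * A j \<le> A n" using A_nonneg by (smt (verit) mult_right_mono)
    then show ?thesis using A_nonneg[of n] by simp
  next
    case False
    have "rho^(n-L) * A L \<le> A n" by (rule chain[OF H order_refl less.prems])
    moreover have "1/2 \<le> rho^(n-L)" using False less.prems by (intro rhoL) (simp add: j_def)
    ultimately have "1/2 * A L \<le> A n" using A_nonneg by (smt (verit) mult_right_mono)
    moreover have "A j \<le> 2 * A L" using A_le[of j] AL by simp
    ultimately show ?thesis by simp
  qed
  have "A n \<le> A (Suc n) + 30*eta*A j"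
    using step_ineq[of n] late_step[OF less.prems] unfolding A_def j_def by linarith
  moreover have "30*eta*A j \<le> 30*eta*(4*A n)" using Aj eta_pos by (intro mult_left_mono) auto
  ultimately show ?case unfolding rho_def by (simp add: algebra_simps)
qed

lemma A_pos: "0 < A n"
proof (cases "L \<le> n")
  case True
  have "rho^(n-L) * A L \<le> A n" using rec by (intro chain[OF _ order_refl True]) auto
  moreover have "0 < rho^(n-L) * A L" using rho_pos AL
    by (intro mult_pos_pos) (auto intro: order.strict_trans2[OF _ AL])
  ultimately show ?thesis by simp
next
  case False
  have "A L \<le> A n" using False by (intro A_anti) simp
  moreover have "0 < A L" using AL by (smt (verit) divide_pos_pos zero_less_power)
  ultimately show ?thesis by simp
qed

lemma good: "\<exists>x\<in>X. \<forall>k\<in>{1..N}. eta \<le> dist_int (x^k)"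
proof -
  have "S N \<noteq> {}" using A_pos[of N] by (auto simp: A_def)
  then obtain x where x: "x \<in> S N" by blast
  have "x \<in> X" using x S_sub by blast
  moreover have "\<forall>k\<in>{1..N}. eta \<le> dist_int (x^k)"
    using x cell_self by (auto simp: S_def)
  ultimately show ?thesis by blast
qed

end



lemma harm_dyadic: "(\<Sum>n\<in>{1..(2::nat)^j}. 1/real n) \<le> real j + 1"
proof (induction j)
  case 0 then show ?case by simp
next
  case (Suc j)
  have split: "{1..(2::nat)^Suc j} = {1..2^j} \<union> {2^j<..2^Suc j}" by auto
  have "(\<Sum>n\<in>{1..(2::nat)^Suc j}. 1/real n) = (\<Sum>n\<in>{1..2^j}. 1/real n) + (\<Sum>n\<in>{(2::nat)^j<..2^Suc j}. 1/real n)"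
    unfolding split by (rule sum.union_disjoint) auto
  also have "(\<Sum>n\<in>{(2::nat)^j<..2^Suc j}. 1/real n) \<le> (\<Sum>n\<in>{(2::nat)^j<..2^Suc j}. 1/2^j)"
  proof (rule sum_mono)
    fix n assume "n \<in> {(2::nat)^j<..2^Suc j}"
    then have "(2::real)^j \<le> real n" by (metis greaterThanAtMost_iff less_imp_le of_nat_le_iff of_nat_numeral of_nat_power)
    then show "1/real n \<le> 1/2^j" by (simp add: frac_le)
  qed
  also have "\<dots> = 1" by simp
  finally show ?case using Suc by simp
qed

lemma pow_big: "24 \<le> p \<Longrightarrow> (2::real)^15 * real p \<le> 2^p"
proof (induction p rule: dec_induct)
  case base then show ?case by simp
next
  case (step p)
  have "(2::real)^15 * real (Suc p) \<le> 2 * (2^15 * real p)" using step.hyps by simp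
  also have "\<dots> \<le> 2 * 2^p" using step.IH by simp
  finally show ?case by simp
qed

lemma two_p_le: "2 * p \<le> (2::nat)^p"
proof (induction p)
  case 0 then show ?case by simp
next
  case (Suc p)
  then show ?case by (cases p) (auto simp: algebra_simps)
qed

lemma params:
  assumes p24: "24 \<le> p"
  shows "cset p (1/(2^12 * real p * 2^p)) (2*p*2^p)"
proof -
  define a :: real where "a = 1/2^p"
  define eta :: real where "eta = 1/(2^12 * real p * 2^p)"
  define L :: nat where "L = 2*p*2^p"
  have pp: "(0::real) < 2^p" by simp
  have p0: "(1::real) \<le> real p" using p24 by simp
  have eta0: "0 < eta" using p24 by (simp add: eta_def)
  have etaa: "eta = a/(2^12 * real p)" by (simp add: eta_def a_def)
  have a0: "0 < a" by (simp add: a_def)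
  have etaL: "eta * real L = 2/2^12" unfolding eta_def L_def using p24 by (simp add: field_simps)
  have eta_le: "eta \<le> 1/2^12"
  proof -
    have "(1::real) \<le> real p * 2^p" using p0 by (smt (verit) mult_le_cancel_left1 one_le_power)
    then show ?thesis unfolding eta_def by (simp add: frac_le)
  qed
  have Lpow: "(2::real)^(2*p) \<le> (1 + a)^L"
  proof -
    have m1: "-1 \<le> a" using a0 by simp
    have "1 + real (2^p) * a \<le> (1 + a)^(2^p)" using Bernoulli_inequality[OF m1, of "2^p"] by simp
    moreover have "real (2^p) * a = 1" by (simp add: a_def)
    ultimately have "2 \<le> (1 + a)^(2^p)" by simp
    then have "2^(2*p) \<le> ((1 + a)^(2^p))^(2*p)" by (intro power_mono) auto
    also have "\<dots> = (1+a)^L" by (simp add: L_def power_mult[symmetric] mult.commute)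
    finally show ?thesis by simp
  qed
  have Lbig: "8/eta \<le> (1 + a)^L"
  proof -
    have "8/eta = 2^15 * real p * 2^p" by (simp add: eta_def)
    also have "\<dots> \<le> 2^p * 2^p" using pow_big[OF p24] by (intro mult_right_mono) auto
    also have "(2::real)^p * 2^p = 2^(2*p)" by (simp add: power_add[symmetric] mult_2)
    finally show ?thesis using Lpow by simp
  qed
  have harm: "(\<Sum>n\<in>{1..L}. 1/real n) \<le> 2 * real p + 1"
  proof -
    have "L \<le> 2^(2*p)"
    proof -
      have "L \<le> 2^p * 2^p" unfolding L_def using two_p_le[of p] by (intro mult_right_mono) auto
      then show ?thesis by (simp add: power_add[symmetric] mult_2)
    qed
    then have "(\<Sum>n\<in>{1..L}. 1/real n) \<le> (\<Sum>n\<in>{1..(2::nat)^(2*p)}. 1/real n)"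
      by (intro sum_mono2) auto
    also have "\<dots> \<le> real (2*p) + 1" by (rule harm_dyadic)
    finally show ?thesis by simp
  qed
  have early: "6*eta*a*real L + 24*eta*(\<Sum>n\<in>{1..L}. 1/real n) \<le> a/2"
  proof -
    have t1: "6*eta*a*real L = a*(12/2^12)" using etaL by (simp add: algebra_simps)
    have "24*eta*(\<Sum>n\<in>{1..L}. 1/real n) \<le> 24*eta*(2*real p + 1)" using harm eta0 by (intro mult_left_mono) auto
    also have "\<dots> = a*(24*(2*real p + 1)/(2^12 * real p))" using p0 by (simp add: etaa field_simps)
    also have "\<dots> \<le> a*(72/2^12)"
    proof -
      have "24*(2*real p + 1)/(2^12 * real p) \<le> 72/2^12" using p0 by (simp add: field_simps)
      then show ?thesis using a0 by (intro mult_left_mono) auto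
    qed
    finally have t2: "24*eta*(\<Sum>n\<in>{1..L}. 1/real n) \<le> a*(72/2^12)" .
    have t3: "a*(12/2^12) + a*(72/2^12) \<le> a/2" using a0 by simp
    show ?thesis using t1 t2 t3 by linarith
  qed
  have rho: "1/2 \<le> (1 - 120*eta)^L"
  proof -
    have "1 - real L * (120*eta) \<le> (1 - 120*eta)^L"
      using Bernoulli_inequality[of "-(120*eta)" L] eta_le by (simp add: algebra_simps)
    moreover have "real L * (120*eta) = 240/2^12" using etaL by (simp add: algebra_simps)
    ultimately show ?thesis by simp
  qed
  show ?thesis
  proof (unfold_locales, fold eta_def L_def)
    show "1 \<le> p" using p24 by simp
    show "0 < eta" by (rule eta0)
    show "eta < 1/2^p" unfolding etaa a_def using p0 by (simp add: field_simps)
    show "2*eta \<le> 1/4" using eta_le by simp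
    show "8/eta \<le> (1 + 1/2^p)^L" using Lbig by (simp add: a_def)
    show "eta*(real L + 1) \<le> 1/2" using etaL eta_le by (simp add: algebra_simps)
    show "6*eta*(1/2^p)*real L + 24*eta*(\<Sum>n\<in>{1..L}. 1/real n) \<le> (1/2^p)/2" using early by (simp add: a_def)
    show "1/2 \<le> (1 - 120*eta)^L" by (rule rho)
    show "120*eta < 1" using eta_le by simp
  qed
qed



theorem theorem1:
  fixes \<delta> :: real
  assumes "\<delta> > 0"
  shows "\<exists>\<epsilon>::real. 0 < \<epsilon> \<and> \<epsilon> < \<delta> \<and>
    (INF n\<in>{1::nat..}. dist_int ((1 + \<epsilon>) ^ n)) > 2 powr (-17) * \<epsilon> / \<bar>ln \<epsilon>\<bar>"
proof -
  obtain n0 where n0: "2/\<delta> < 2^n0" using real_arch_pow[of 2 "2/\<delta>"] by auto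
  define p where "p = max 24 n0"
  have p24: "24 \<le> p" by (simp add: p_def)
  have "(2::real)^n0 \<le> 2^p" by (simp add: p_def power_increasing)
  then have "2/\<delta> < 2^p" using n0 by linarith
  then have small: "2/2^p < \<delta>" using assms by (simp add: field_simps)
  define eta :: real where "eta = 1/(2^12 * real p * 2^p)"
  define L where "L = 2*p*2^p"
  define a :: real where "a = 1/2^p"
  have cs: "cset p eta L" unfolding eta_def L_def by (rule params[OF p24])
  have a0: "0 < a" by (simp add: a_def)
  have eta0: "0 < eta" using p24 by (simp add: eta_def)
  define K where "K N = {x \<in> {1+a..1+2*a}. \<forall>k\<in>{1..N}. eta \<le> dist_int (x^k)}" for N
  have Kne: "K N \<noteq> {}" for N
  proof -
    obtain x where x: "x \<in> cset.X p" "\<forall>k\<in>{1..N}. eta \<le> dist_int (x^k)"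
      using cset.good[OF cs, of N] by blast
    have "x \<in> {1+a..1+2*a}" using x(1) unfolding cset.X_def[OF cs] a_def by auto
    then show ?thesis using x(2) unfolding K_def by blast
  qed
  have Kcomp: "compact (K N)" for N
  proof -
    have eq: "K N = {1+a..1+2*a} \<inter> (\<Inter>k\<in>{1..N}. {x. eta \<le> dist_int (x^k)})"
      unfolding K_def by auto
    have cl: "closed {x. eta \<le> dist_int (x^k)}" for k
    proof (rule closed_Collect_le)
      show "continuous_on UNIV (\<lambda>x::real. eta)" by (rule continuous_on_const)
      show "continuous_on UNIV (\<lambda>x::real. dist_int (x^k))"
        by (rule continuous_on_compose2[OF dist_int_cont]) (auto intro!: continuous_intros)
    qed
    have "closed (\<Inter>k\<in>{1..N}. {x. eta \<le> dist_int (x^k)})" using cl by (intro closed_INT) auto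
    then show ?thesis unfolding eq by (intro compact_Int_closed compact_Icc)
  qed
  have Kmono: "m \<le> n \<Longrightarrow> K n \<subseteq> K m" for m n unfolding K_def by auto
  obtain x where x: "x \<in> \<Inter>(range K)" using compact_nest[of K] Kne Kcomp Kmono by blast
  define \<epsilon> where "\<epsilon> = x - 1"
  have xI: "x \<in> {1+a..1+2*a}" using x unfolding K_def by auto
  have e1: "a \<le> \<epsilon>" "\<epsilon> \<le> 2*a" using xI by (auto simp: \<epsilon>_def)
  have e0: "0 < \<epsilon>" using e1 a0 by linarith
  have eps_d: "\<epsilon> < \<delta>" using e1 small by (simp add: a_def)
  have INF_ge: "eta \<le> (INF n\<in>{1::nat..}. dist_int ((1 + \<epsilon>) ^ n))"
  proof (rule cINF_greatest)
    show "{1::nat..} \<noteq> {}" by auto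
    fix n :: nat assume n: "n \<in> {1..}"
    have "x \<in> K n" using x by auto
    then show "eta \<le> dist_int ((1 + \<epsilon>)^n)" using n unfolding K_def \<epsilon>_def by auto
  qed
  have rhs: "2 powr (-17) * \<epsilon> / \<bar>ln \<epsilon>\<bar> < eta"
  proof -
    have pp: "(2::real)^24 \<le> 2^p" by (rule power_increasing[OF p24]) simp
    have a_small: "2*a \<le> 2/2^24" using pp by (simp add: a_def frac_le)
    have eps1: "\<epsilon> < 1" using e1 a_small by simp
    have lneps: "ln \<epsilon> \<le> ln (2*a)" using e1 e0 by simp
    have ln2a: "ln (2*a) = - (real p - 1) * ln 2"
      by (simp add: a_def ln_div ln_realpow algebra_simps)
    have l23: "2/3 \<le> ln (2::real)" by (rule ln2_ge_two_thirds)
    have p1r: "23 \<le> real p - 1" using p24 by simp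
    have absln: "(real p - 1) * (2/3) \<le> \<bar>ln \<epsilon>\<bar>"
    proof -
      have "(real p - 1) * (2/3) \<le> (real p - 1) * ln 2" using l23 p1r by (intro mult_left_mono) auto
      also have "\<dots> \<le> - ln \<epsilon>" using lneps ln2a by (simp add: algebra_simps)
      also have "\<dots> \<le> \<bar>ln \<epsilon>\<bar>" by simp
      finally show ?thesis .
    qed
    have dpos: "0 < (real p - 1) * (2/3)" using p1r by simp
    have pw1: "(2::real) powr (-17) = inverse (2 powr 17)" by (rule powr_minus)
    have pw2: "(2::real) powr 17 = 2^17" by (rule powr_numeral) simp
    have pw: "2 powr (-17) = (1/2^17 :: real)" unfolding pw1 pw2 by (simp add: inverse_eq_divide)
    have "2 powr (-17) * \<epsilon> / \<bar>ln \<epsilon>\<bar> = (1/2^17) * (\<epsilon> / \<bar>ln \<epsilon>\<bar>)" by (simp add: pw)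
    also have "\<epsilon> / \<bar>ln \<epsilon>\<bar> \<le> (2*a) / ((real p - 1) * (2/3))"
      using e1 e0 absln dpos by (intro frac_le) auto
    also have "(1/2^17) * ((2*a) / ((real p - 1) * (2/3))) < eta"
    proof -
      have "(1/2^17) * ((2*a) / ((real p - 1) * (2/3))) = a * (3 / (2^17 * (real p - 1)))"
        using dpos by (simp add: field_simps)
      also have "\<dots> < a * (1 / (2^12 * real p))"
      proof (rule mult_strict_left_mono[OF _ a0])
        have "3 * (2^12 * real p) < 2^17 * (real p - 1)" using p1r by simp
        then show "3 / (2^17 * (real p - 1)) < 1 / (2^12 * real p)" using p1r by (simp add: field_simps)
      qed
      also have "\<dots> = eta" by (simp add: eta_def a_def)
      finally show ?thesis .
    qed
    finally show ?thesis by simp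
  qed
  show ?thesis using e0 eps_d INF_ge rhs by (intro exI[of _ \<epsilon>]) auto
qed


end
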